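(* Let $X=\{x_1,\dots,x_n\}$. Every partial shelling $\sigma_1,\dots,\sigma_m$ of the cross-polytope $O_n$ defines an isometric ordering of the corresponding vertices $c_1,\dots,c_m$ of the cube $2^X$, i.e. each set $\{c_1,\dots,c_j\}$, $1\le j\le m$, is isometric. Conversely, if $C\subseteq 2^X$ is an isometric class, then any ordering $c_1,\dots,c_m$ of $C$ in which every set $\{c_1,\dots,c_j\}$ is isometric defines (via the corresponding facets) a partial shelling of $O_n$.
   Context: Let $\pm X=\{+x_1,-x_1,\dots,+x_n,-x_n\}$. The $n$-dimensional cross-polytope $O_n$ is the simplicial complex on $\pm X$ whose facets are the $2^n$ sets $\sigma\subseteq\pm X$ containing exactly one of $+x_i,-x_i$ for each $i$. Facets correspond bijectively to subsets $c\subseteq X$ via $c=\{x_i:+x_i\in\sigma\}$. A partial shelling of $O_n$ is a sequence $\sigma_1,\dots,\sigma_m$ of distinct facets such that for every $2\le j\le m$, the family $2^{\sigma_j}\cap\bigcup_{i<j}2^{\sigma_i}$ is a pure simplicial complex whose inclusion-maximal sets all have size $n-1$ (equivalently: for all $i<j$ there is $k<j$ with $\sigma_i\cap\sigma_j\subseteq\sigma_k\cap\sigma_j$ and $|\sigma_k\cap\sigma_j|=n-1$). A class $C\subseteq 2^X$ is isometric if the graph on $C$ joining sets at Hamming distance $1$ is connected and its graph distance equals the Hamming distance $|c\Delta c'|$ for all $c,c'\in C$. *)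

theory Defs
  imports Main
begin

text \<open>Signed ground set: (x, True) is +x, (x, False) is -x.\<close>

definition cross_facets :: "'a set \<Rightarrow> ('a \<times> bool) set set" where
  "cross_facets X = {\<sigma>. \<sigma> \<subseteq> X \<times> UNIV \<and> (\<forall>x\<in>X. ((x,True) \<in> \<sigma>) \<noteq> ((x,False) \<in> \<sigma>))}"

definition facet_of :: "'a set \<Rightarrow> 'a set \<Rightarrow> ('a \<times> bool) set" where
  "facet_of X c = {(x,True) | x. x \<in> X \<and> x \<in> c} \<union> {(x,False) | x. x \<in> X \<and> x \<notin> c}"

definition vertex_of :: "('a \<times> bool) set \<Rightarrow> 'a set" where
  "vertex_of \<sigma> = {x. (x,True) \<in> \<sigma>}"

definition pure_codim1 :: "nat \<Rightarrow> 'b set set \<Rightarrow> bool" where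
  "pure_codim1 n F = (\<forall>S\<in>F. (\<forall>T\<in>F. S \<subseteq> T \<longrightarrow> T = S) \<longrightarrow> card S = n - 1)"

definition partial_shelling :: "'a set \<Rightarrow> ('a \<times> bool) set list \<Rightarrow> bool" where
  "partial_shelling X \<sigma>s =
     (distinct \<sigma>s \<and> set \<sigma>s \<subseteq> cross_facets X \<and>
      (\<forall>j. 1 \<le> j \<and> j < length \<sigma>s \<longrightarrow>
          pure_codim1 (card X) (Pow (\<sigma>s ! j) \<inter> (\<Union>i<j. Pow (\<sigma>s ! i)))))"

definition hamming_walk :: "'a set set \<Rightarrow> 'a set list \<Rightarrow> bool" where
  "hamming_walk C ps = (ps \<noteq> [] \<and> set ps \<subseteq> C \<and>
     (\<forall>i. Suc i < length ps \<longrightarrow> card ((ps ! i) - (ps ! Suc i) \<union> ((ps ! Suc i) - (ps ! i))) = 1))"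

definition connected_by :: "'a set set \<Rightarrow> 'a set \<Rightarrow> 'a set \<Rightarrow> nat \<Rightarrow> bool" where
  "connected_by C c c' k = (\<exists>ps. hamming_walk C ps \<and> hd ps = c \<and> last ps = c' \<and> length ps = Suc k)"

definition graph_dist :: "'a set set \<Rightarrow> 'a set \<Rightarrow> 'a set \<Rightarrow> nat" where
  "graph_dist C c c' = (LEAST k. connected_by C c c' k)"

definition isometric :: "'a set set \<Rightarrow> bool" where
  "isometric C = (\<forall>c\<in>C. \<forall>c'\<in>C. (\<exists>k. connected_by C c c' k) \<and>
      graph_dist C c c' = card (c - c' \<union> (c' - c)))"

end

theory Submission imports Defs begin
abbreviation sd :: "'a set \<Rightarrow> 'a set \<Rightarrow> 'a set" where "sd A B \<equiv> A - B \<union> (B - A)"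

lemma cf_eq: "\<sigma> \<in> cross_facets X \<Longrightarrow> \<sigma> = facet_of X (vertex_of \<sigma>) \<and> vertex_of \<sigma> \<subseteq> X"
proof -
  assume h: "\<sigma> \<in> cross_facets X"
  have s: "\<sigma> \<subseteq> X \<times> UNIV" and e: "\<And>x. x \<in> X \<Longrightarrow> ((x,True) \<in> \<sigma>) \<noteq> ((x,False) \<in> \<sigma>)"
    using h unfolding cross_facets_def by auto
  have "\<sigma> = facet_of X (vertex_of \<sigma>)"
  proof (rule set_eqI)
    fix p :: "'a \<times> bool"
    obtain x b where p: "p = (x,b)" by (cases p)
    show "p \<in> \<sigma> \<longleftrightarrow> p \<in> facet_of X (vertex_of \<sigma>)"
      unfolding p facet_of_def vertex_of_def using s e[of x] by (cases b) auto
  qed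
  moreover have "vertex_of \<sigma> \<subseteq> X" using s unfolding vertex_of_def by auto
  ultimately show ?thesis by blast
qed

lemma vf: "c \<subseteq> X \<Longrightarrow> vertex_of (facet_of X c) = c"
  unfolding facet_of_def vertex_of_def by auto

lemma fcf: "facet_of X c \<in> cross_facets X"
  unfolding facet_of_def cross_facets_def by auto

lemma fint: "facet_of X a \<inter> facet_of X b = {(x,t). x \<in> X - sd a b \<and> t = (x \<in> a)}"
  unfolding facet_of_def by auto

lemma fsub1: "sd k j \<subseteq> sd i j \<Longrightarrow> facet_of X i \<inter> facet_of X j \<subseteq> facet_of X k \<inter> facet_of X j"
  unfolding fint by auto

lemma fsub2: "k \<subseteq> X \<Longrightarrow> j \<subseteq> X \<Longrightarrow> facet_of X i \<inter> facet_of X j \<subseteq> facet_of X k \<inter> facet_of X j \<Longrightarrow> sd k j \<subseteq> sd i j"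
proof
  fix x assume a: "k \<subseteq> X" "j \<subseteq> X" "facet_of X i \<inter> facet_of X j \<subseteq> facet_of X k \<inter> facet_of X j" "x \<in> sd k j"
  show "x \<in> sd i j"
  proof (rule ccontr)
    assume "x \<notin> sd i j"
    hence "(x, x \<in> j) \<in> facet_of X i \<inter> facet_of X j" using a unfolding fint by auto
    hence "(x, x \<in> j) \<in> facet_of X k \<inter> facet_of X j" using a by blast
    thus False using a(4) unfolding fint by auto
  qed
qed

lemma fcard: assumes "finite X" "a \<subseteq> X" "b \<subseteq> X"
  shows "card (facet_of X a \<inter> facet_of X b) = card X - card (sd a b)"
proof -
  have "facet_of X a \<inter> facet_of X b = (\<lambda>x. (x, x \<in> a)) ` (X - sd a b)"
    unfolding fint by auto
  moreover have "inj_on (\<lambda>x. (x, x \<in> a)) (X - sd a b)" by (auto simp: inj_on_def)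
  ultimately have "card (facet_of X a \<inter> facet_of X b) = card (X - sd a b)" by (simp add: card_image)
  also have "\<dots> = card X - card (sd a b)" using assms by (subst card_Diff_subset) (auto intro: finite_subset)
  finally show ?thesis .
qed

lemma ffin: "finite X \<Longrightarrow> finite (facet_of X c)"
  unfolding facet_of_def by auto

lemma conn_refl: "c \<in> C \<Longrightarrow> connected_by C c c 0"
  unfolding connected_by_def hamming_walk_def by (rule exI[of _ "[c]"]) auto

lemma conn_cons: assumes "c \<in> C" "card (sd c d) = 1" "connected_by C d e k"
  shows "connected_by C c e (Suc k)"
proof -
  obtain ps where ps: "hamming_walk C ps" "hd ps = d" "last ps = e" "length ps = Suc k"
    using assms(3) unfolding connected_by_def by blast
  have "hamming_walk C (c # ps)" using ps assms(1,2) unfolding hamming_walk_def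
  proof (intro conjI allI impI)
    fix i assume i: "Suc i < length (c # ps)"
    show "card (sd ((c # ps) ! i) ((c # ps) ! Suc i)) = 1"
    proof (cases i)
      case 0
      have "ps ! 0 = d" using ps hd_conv_nth[of ps] by (cases ps) auto
      then show ?thesis using 0 assms(2) by simp
    next
      case (Suc m)
      then show ?thesis using i ps(1) unfolding hamming_walk_def by auto
    qed
  qed auto
  thus ?thesis using ps unfolding connected_by_def
    by (intro exI[of _ "c # ps"]) auto
qed

lemma conn_mono: "C \<subseteq> D \<Longrightarrow> connected_by C c d k \<Longrightarrow> connected_by D c d k"
  unfolding connected_by_def hamming_walk_def by blast

lemma conn_mem: "connected_by C c d k \<Longrightarrow> c \<in> C \<and> d \<in> C"
  unfolding connected_by_def hamming_walk_def by (metis hd_in_set last_in_set subsetD)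

lemma conn_split: assumes "connected_by C c d (Suc k)"
  shows "\<exists>p\<in>C. card (sd c p) = 1 \<and> connected_by C p d k"
proof -
  obtain ps where ps: "hamming_walk C ps" "hd ps = c" "last ps = d" "length ps = Suc (Suc k)"
    using assms unfolding connected_by_def by blast
  then obtain q qs where qs: "ps = c # qs" by (cases ps) auto
  have w: "hamming_walk C qs" using ps qs unfolding hamming_walk_def by auto
  have "card (sd c (hd qs)) = 1" using ps(1,4) qs unfolding hamming_walk_def
    by (metis Suc_less_eq hd_conv_nth length_Cons list.size(3) nat.distinct(1) nth_Cons_0 nth_Cons_Suc zero_less_Suc)
  moreover have "hd qs \<in> C" using w unfolding hamming_walk_def by auto
  moreover have "connected_by C (hd qs) d k" using w ps qs unfolding connected_by_def by auto
  ultimately show ?thesis by blast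
qed

lemma sd_tri: "finite (sd a b) \<Longrightarrow> finite (sd b c) \<Longrightarrow> card (sd a c) \<le> card (sd a b) + card (sd b c)"
proof -
  assume f: "finite (sd a b)" "finite (sd b c)"
  have "sd a c \<subseteq> sd a b \<union> sd b c" by auto
  hence "card (sd a c) \<le> card (sd a b \<union> sd b c)" using f by (intro card_mono) auto
  also have "\<dots> \<le> card (sd a b) + card (sd b c)" by (rule card_Un_le)
  finally show ?thesis .
qed

lemma conn_lower: "connected_by C c d k \<Longrightarrow> card (sd c d) \<le> k \<and> finite (sd c d)"
proof (induction k arbitrary: c)
  case 0
  then obtain ps where "length ps = 1" "hd ps = c" "last ps = d" unfolding connected_by_def by auto
  then have "c = d" by (cases ps) auto
  then show ?case by simp
next
  case (Suc k)
  then obtain p where p: "card (sd c p) = 1" "connected_by C p d k" using conn_split by blast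
  have f: "finite (sd c p)" using p(1) by (metis card.infinite zero_neq_one)
  from Suc.IH[OF p(2)] have "card (sd p d) \<le> k" "finite (sd p d)" by auto
  moreover have "sd c d \<subseteq> sd c p \<union> sd p d" by auto
  moreover have "card (sd c d) \<le> card (sd c p) + card (sd p d)" using sd_tri[of c p d] f calculation by blast
  moreover have "finite (sd c d)" using f calculation by (meson finite_UnI finite_subset)
  ultimately show ?case using p(1) by simp
qed

lemma conn_sym: "connected_by C c d k \<Longrightarrow> connected_by C d c k"
proof -
  assume "connected_by C c d k"
  then obtain ps where ps: "hamming_walk C ps" "hd ps = c" "last ps = d" "length ps = Suc k"
    unfolding connected_by_def by blast
  have "hamming_walk C (rev ps)" using ps(1) unfolding hamming_walk_def
  proof (intro conjI allI impI)
    fix i assume h: "ps \<noteq> [] \<and> set ps \<subseteq> C \<and> (\<forall>i. Suc i < length ps \<longrightarrow> card (sd (ps ! i) (ps ! Suc i)) = 1)"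
      "Suc i < length (rev ps)"
    let ?m = "length ps - Suc (Suc i)"
    have "card (sd (ps ! ?m) (ps ! Suc ?m)) = 1" using h by auto
    moreover have "rev ps ! i = ps ! Suc ?m" "rev ps ! Suc i = ps ! ?m" using h(2)
      by (auto simp: rev_nth Suc_diff_Suc)
    ultimately show "card (sd (rev ps ! i) (rev ps ! Suc i)) = 1" by (simp add: Un_commute)
  qed auto
  thus ?thesis using ps unfolding connected_by_def
    by (intro exI[of _ "rev ps"]) (auto simp: hd_rev last_rev)
qed

definition iso' where "iso' C = (\<forall>c\<in>C. \<forall>c'\<in>C. connected_by C c c' (card (sd c c')))"

lemma iso_iff: "isometric C = iso' C"
  unfolding isometric_def iso'_def graph_dist_def
proof (intro ball_cong refl iffI)
  fix c c' assume h: "(\<exists>k. connected_by C c c' k) \<and> (LEAST k. connected_by C c c' k) = card (sd c c')"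
  then show "connected_by C c c' (card (sd c c'))" by (metis LeastI_ex)
next
  fix c c' assume h: "connected_by C c c' (card (sd c c'))"
  have "(LEAST k. connected_by C c c' k) \<le> card (sd c c')" using h by (rule Least_le)
  moreover have "card (sd c c') \<le> (LEAST k. connected_by C c c' k)"
    using conn_lower[OF LeastI[of "connected_by C c c'", OF h]] by simp
  ultimately show "(\<exists>k. connected_by C c c' k) \<and> (LEAST k. connected_by C c c' k) = card (sd c c')"
    using h by auto
qed


lemma sd_card_pos: "finite X \<Longrightarrow> a \<subseteq> X \<Longrightarrow> b \<subseteq> X \<Longrightarrow> a \<noteq> b \<Longrightarrow> card (sd a b) \<ge> 1 \<and> finite (sd a b)"
proof -
  assume h: "finite X" "a \<subseteq> X" "b \<subseteq> X" "a \<noteq> b"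
  have f: "finite (sd a b)" using h by (meson Diff_subset finite_UnI finite_subset subset_trans)
  have "sd a b \<noteq> {}" using h(4) by blast
  thus ?thesis using f by (simp add: Suc_leI card_gt_0_iff)
qed

lemma shell_step:
  assumes fin: "finite X" and ps: "partial_shelling X \<sigma>s" and j: "1 \<le> j" "j < length \<sigma>s" and i: "i < j"
  shows "\<exists>k<j. card (sd (vertex_of (\<sigma>s!k)) (vertex_of (\<sigma>s!j))) = 1 \<and>
     sd (vertex_of (\<sigma>s!k)) (vertex_of (\<sigma>s!j)) \<subseteq> sd (vertex_of (\<sigma>s!i)) (vertex_of (\<sigma>s!j))"
proof -
  have psd: "distinct \<sigma>s \<and> set \<sigma>s \<subseteq> cross_facets X \<and> (\<forall>j. 1 \<le> j \<and> j < length \<sigma>s \<longrightarrow>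
          pure_codim1 (card X) (Pow (\<sigma>s ! j) \<inter> (\<Union>i<j. Pow (\<sigma>s ! i))))"
    using ps unfolding partial_shelling_def .
  note dist = conjunct1[OF psd] and sub = conjunct1[OF conjunct2[OF psd]]
    and shl = conjunct2[OF conjunct2[OF psd]]
  have cf: "\<sigma>s ! m = facet_of X (vertex_of (\<sigma>s ! m)) \<and> vertex_of (\<sigma>s ! m) \<subseteq> X" if "m < length \<sigma>s" for m
  proof (rule cf_eq)
    show "\<sigma>s ! m \<in> cross_facets X" using sub that by (meson nth_mem subsetD)
  qed
  define F where "F = Pow (\<sigma>s ! j) \<inter> (\<Union>i<j. Pow (\<sigma>s ! i))"
  from shl have pc: "pure_codim1 (card X) F" using j unfolding F_def by blast
  have "finite (\<sigma>s ! j)" using ffin[OF fin, of "vertex_of (\<sigma>s ! j)"] cf[OF j(2)] by simp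
  hence finF: "finite F" unfolding F_def by (intro finite_Int disjI1) simp
  have AF: "\<sigma>s ! i \<inter> \<sigma>s ! j \<in> F" unfolding F_def using i by auto
  obtain S where S: "S \<in> F" "\<sigma>s ! i \<inter> \<sigma>s ! j \<subseteq> S" "\<forall>T\<in>F. S \<subseteq> T \<longrightarrow> S = T"
    using finite_has_maximal2[OF finF AF] by blast
  then obtain k where k: "k < j" "S \<subseteq> \<sigma>s ! k" "S \<subseteq> \<sigma>s ! j" unfolding F_def by auto
  have kF: "\<sigma>s ! k \<inter> \<sigma>s ! j \<in> F" unfolding F_def using k by auto
  have kS: "S \<subseteq> \<sigma>s ! k \<inter> \<sigma>s ! j" using k(2,3) by (rule Int_greatest)
  have Seq: "S = \<sigma>s ! k \<inter> \<sigma>s ! j" using S(3)[rule_format, OF kF kS] .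
  have mxS: "\<forall>T\<in>F. S \<subseteq> T \<longrightarrow> T = S" using S(3) by (simp add: eq_commute)
  have cSX: "card S = card X - 1" using pc S(1) mxS unfolding pure_codim1_def by blast
  have kl: "k < length \<sigma>s" "i < length \<sigma>s" using k i j by auto
  define vi where "vi = vertex_of (\<sigma>s ! i)"
  define vj where "vj = vertex_of (\<sigma>s ! j)"
  define vk where "vk = vertex_of (\<sigma>s ! k)"
  have ei: "\<sigma>s ! i = facet_of X vi" "vi \<subseteq> X" using cf[OF kl(2)] unfolding vi_def by auto
  have ej: "\<sigma>s ! j = facet_of X vj" "vj \<subseteq> X" using cf[OF j(2)] unfolding vj_def by auto
  have ek: "\<sigma>s ! k = facet_of X vk" "vk \<subseteq> X" using cf[OF kl(1)] unfolding vk_def by auto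
  have cS: "card S = card X - card (sd vk vj)"
    unfolding Seq ek(1) ej(1) by (rule fcard[OF fin ek(2) ej(2)])
  have "\<sigma>s ! k \<noteq> \<sigma>s ! j" using dist kl j k by (simp add: nth_eq_iff_index_eq)
  hence "vk \<noteq> vj" unfolding ek(1) ej(1) by auto
  hence pos: "card (sd vk vj) \<ge> 1" "finite (sd vk vj)" using sd_card_pos[OF fin ek(2) ej(2)] by auto
  have "sd vk vj \<subseteq> X" using ek(2) ej(2) by blast
  hence "card (sd vk vj) \<le> card X" using fin by (simp add: card_mono)
  hence c1: "card (sd vk vj) = 1" using cSX cS pos by linarith
  have "\<sigma>s ! i \<inter> \<sigma>s ! j \<subseteq> \<sigma>s ! k \<inter> \<sigma>s ! j" using S(2) Seq by simp
  hence "sd vk vj \<subseteq> sd vi vj"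
    unfolding ei(1) ej(1) ek(1) by (rule fsub2[OF ek(2) ej(2)])
  thus ?thesis using c1 k(1) unfolding vi_def vj_def vk_def by blast
qed

lemma iso_single: "iso' {c}"
  unfolding iso'_def using conn_refl[of c "{c}"] by simp

lemma dir1:
  assumes fin: "finite X" and ps: "partial_shelling X \<sigma>s"
  shows "j < length \<sigma>s \<Longrightarrow> iso' (set (take (Suc j) (map vertex_of \<sigma>s)))"
proof (induction j)
  case 0
  then obtain s ss where "\<sigma>s = s # ss" by (cases \<sigma>s) auto
  then show ?case using iso_single by simp
next
  case (Suc j)
  let ?vs = "map vertex_of \<sigma>s"
  let ?J = "Suc j"
  define old where "old = set (take ?J ?vs)"
  define new where "new = set (take (Suc ?J) ?vs)"
  have IH: "iso' old" using Suc unfolding old_def by simp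
  have newe: "new = insert (?vs ! ?J) old" unfolding new_def old_def using Suc.prems
    by (auto simp: take_Suc_conv_app_nth)
  have cf: "\<And>m. m < length \<sigma>s \<Longrightarrow> \<sigma>s ! m = facet_of X (vertex_of (\<sigma>s ! m)) \<and> vertex_of (\<sigma>s ! m) \<subseteq> X"
    using ps unfolding partial_shelling_def by (intro cf_eq) auto
  have oldi: "\<And>b. b \<in> old \<Longrightarrow> \<exists>i<?J. b = ?vs ! i" unfolding old_def
    using Suc.prems by (auto simp: in_set_conv_nth)
  have key: "connected_by new (?vs ! ?J) (?vs ! i) (card (sd (?vs ! ?J) (?vs ! i)))" if i: "i < ?J" for i
  proof -
    obtain k where k: "k < ?J" "card (sd (vertex_of (\<sigma>s!k)) (vertex_of (\<sigma>s!?J))) = 1"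
      "sd (vertex_of (\<sigma>s!k)) (vertex_of (\<sigma>s!?J)) \<subseteq> sd (vertex_of (\<sigma>s!i)) (vertex_of (\<sigma>s!?J))"
      using shell_step[OF fin ps _ Suc.prems i] by auto
    let ?a = "vertex_of (\<sigma>s!i)" and ?b = "vertex_of (\<sigma>s!k)" and ?c = "vertex_of (\<sigma>s!?J)"
    have fin2: "finite (sd ?a ?c)" using cf[of i] cf[of ?J] Suc.prems i fin
      by (meson Diff_subset finite_UnI finite_subset le_less_trans less_imp_le subset_trans)
    have eq: "sd ?b ?a = sd ?a ?c - sd ?b ?c" using k(3) by blast
    have cge: "card (sd ?a ?c) \<ge> 1" using k(2,3) fin2 card_mono by metis
    have "card (sd ?a ?c - sd ?b ?c) = card (sd ?a ?c) - card (sd ?b ?c)"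
      using card_Diff_subset[OF finite_subset[OF k(3) fin2] k(3)] .
    hence ceq: "card (sd ?b ?a) = card (sd ?a ?c) - 1" unfolding eq using k(2) by simp
    have mem: "?vs ! m \<in> old" if m: "m < ?J" for m
      unfolding old_def using m Suc.prems by (subst in_set_conv_nth) (rule exI[of _ m], simp)
    have "?b \<in> old" "?a \<in> old" using mem[OF k(1)] mem[OF i] k(1) i Suc.prems by auto
    hence c1: "connected_by old ?b ?a (card (sd ?b ?a))" using IH unfolding iso'_def by blast
    have c2: "connected_by new ?b ?a (card (sd ?b ?a))" using conn_mono[OF _ c1] newe by blast
    have "?c \<in> new" using newe Suc.prems by simp
    moreover have "card (sd ?c ?b) = 1" using k(2) by (simp add: Un_commute)
    ultimately have "connected_by new ?c ?a (Suc (card (sd ?b ?a)))" using conn_cons c2 by blast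
    moreover have "Suc (card (sd ?b ?a)) = card (sd ?c ?a)" using ceq cge by (simp add: Un_commute)
    ultimately show ?thesis using Suc.prems i k(1) by simp
  qed
  show ?case unfolding new_def[symmetric] iso'_def
  proof (intro ballI)
    fix a b assume ab: "a \<in> new" "b \<in> new"
    show "connected_by new a b (card (sd a b))"
    proof (cases "a \<in> old \<and> b \<in> old")
      case True
      then show ?thesis using IH conn_mono newe unfolding iso'_def by blast
    next
      case False
      show ?thesis
      proof (cases "a = b")
        case True then show ?thesis using conn_refl ab by simp
      next
        case ne: False
        show ?thesis
        proof (cases "a = ?vs ! ?J")
          case True
          then have "b \<in> old" using ab ne newe by auto
          then obtain i where "i < ?J" "b = ?vs ! i" using oldi by blast
          then show ?thesis using key True by blast
        next
          case F2: False
          then have "b = ?vs ! ?J" "a \<in> old" using ab False newe by auto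
          then obtain i where "i < ?J" "a = ?vs ! i" using oldi by blast
          then have "connected_by new b a (card (sd b a))" using key \<open>b = ?vs ! ?J\<close> by blast
          then show ?thesis using conn_sym by (metis Un_commute)
        qed
      qed
    qed
  qed
qed


lemma sd_flip:
  assumes h1: "sd a p = {e}" and h2: "e \<notin> sd c a"
  shows "sd p c = insert e (sd a c)"
proof (rule set_eqI)
  fix x
  have m: "((x \<in> a) \<noteq> (x \<in> p)) = (x = e)"
  proof -
    have "(x \<in> sd a p) = (x = e)" using h1 by simp
    thus ?thesis by blast
  qed
  have n: "((e \<in> c) = (e \<in> a))" using h2 by blast
  show "(x \<in> sd p c) = (x \<in> insert e (sd a c))"
  proof (cases "x = e")
    case True
    then show ?thesis using m n by blast
  next
    case False
    then show ?thesis using m by blast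
  qed
qed

lemma dir2_step:
  assumes fin: "finite X" and sub: "set cs \<subseteq> Pow X" and dist: "distinct cs"
    and iso: "iso' (set (take (Suc j) cs))" and j: "j < length cs" and i: "i < j"
  shows "\<exists>k<j. card (sd (cs!k) (cs!j)) = 1 \<and> sd (cs!k) (cs!j) \<subseteq> sd (cs!i) (cs!j)"
proof -
  define C' where "C' = set (take (Suc j) cs)"
  have mem: "cs ! m \<in> C'" if m: "m \<le> j" for m
    unfolding C'_def using m j by (subst in_set_conv_nth) (rule exI[of _ m], simp)
  have X: "\<And>m. m < length cs \<Longrightarrow> cs ! m \<subseteq> X" using sub by (meson PowD nth_mem subsetD)
  have ne: "cs ! j \<noteq> cs ! i" using dist i j by (simp add: nth_eq_iff_index_eq)
  have il: "i < length cs" using i j by simp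
  have pos: "1 \<le> card (sd (cs!j) (cs!i)) \<and> finite (sd (cs!j) (cs!i))"
    using sd_card_pos[OF fin X[OF j] X[OF il] ne] .
  have fd: "finite (sd (cs!j) (cs!i))" using pos by blast
  obtain d where d: "card (sd (cs!j) (cs!i)) = Suc d"
    using pos by (cases "card (sd (cs!j) (cs!i))") auto
  have isoC: "\<forall>c\<in>C'. \<forall>c'\<in>C'. connected_by C' c c' (card (sd c c'))"
    using iso unfolding iso'_def C'_def[symmetric] .
  have "connected_by C' (cs!j) (cs!i) (card (sd (cs!j) (cs!i)))"
    using isoC mem[of j] mem[of i] i by simp
  hence "connected_by C' (cs!j) (cs!i) (Suc d)" unfolding d .
  then obtain p where p: "p \<in> C'" "card (sd (cs!j) p) = 1" "connected_by C' p (cs!i) d"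
    using conn_split by blast
  have pl: "card (sd p (cs!i)) \<le> d" using conn_lower[OF p(3)] by simp
  obtain e where e: "sd (cs!j) p = {e}" using p(2) card_1_singletonE by blast
  have incl: "sd p (cs!j) \<subseteq> sd (cs!i) (cs!j)"
  proof (rule ccontr)
    assume "\<not> ?thesis"
    moreover have "sd p (cs!j) = {e}" using e by (simp add: Un_commute)
    ultimately have en: "e \<notin> sd (cs!i) (cs!j)" by simp
    have "sd p (cs!i) = insert e (sd (cs!j) (cs!i))" using sd_flip[OF e en] .
    hence "card (sd p (cs!i)) = Suc (Suc d)" using en fd d by (simp add: Un_commute)
    thus False using pl by simp
  qed
  obtain k where k: "k < length (take (Suc j) cs)" "p = take (Suc j) cs ! k" using p(1) unfolding C'_def by (auto simp: in_set_conv_nth)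
  have kj: "k \<le> j" "p = cs ! k" using k j by auto
  have "k \<noteq> j" using p(2) kj by auto
  hence "k < j" using kj by simp
  moreover have "card (sd (cs!k) (cs!j)) = 1" using p(2) kj by (simp add: Un_commute)
  ultimately show ?thesis using incl kj by blast
qed

lemma dir2:
  assumes fin: "finite X" and sub: "set cs \<subseteq> Pow X" and dist: "distinct cs"
    and iso: "\<forall>j. 1 \<le> j \<and> j \<le> length cs \<longrightarrow> iso' (set (take j cs))"
  shows "partial_shelling X (map (facet_of X) cs)"
  unfolding partial_shelling_def
proof (intro conjI allI impI)
  have X: "\<And>m. m < length cs \<Longrightarrow> cs ! m \<subseteq> X" using sub by (meson PowD nth_mem subsetD)
  have "inj_on (facet_of X) (set cs)" using sub by (intro inj_onI) (metis PowD subsetD vf)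
  thus "distinct (map (facet_of X) cs)" using dist by (simp add: distinct_map)
  show "set (map (facet_of X) cs) \<subseteq> cross_facets X" using fcf by auto
  fix j assume j: "1 \<le> j \<and> j < length (map (facet_of X) cs)"
  hence jl: "j < length cs" by simp
  have isoj: "iso' (set (take (Suc j) cs))" using iso jl by auto
  let ?s = "map (facet_of X) cs"
  show "pure_codim1 (card X) (Pow (?s ! j) \<inter> (\<Union>i<j. Pow (?s ! i)))"
    unfolding pure_codim1_def
  proof (intro ballI impI)
    fix S assume S: "S \<in> Pow (?s ! j) \<inter> (\<Union>i<j. Pow (?s ! i))"
      and mx: "\<forall>T\<in>Pow (?s ! j) \<inter> (\<Union>i<j. Pow (?s ! i)). S \<subseteq> T \<longrightarrow> T = S"
    have Sj: "S \<subseteq> ?s ! j" using S by blast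
    have "S \<in> (\<Union>i<j. Pow (?s ! i))" using S by (rule IntD2)
    then obtain i where i0: "i < j" "S \<in> Pow (?s ! i)" by (rule UN_E) simp
    have i: "i < j" "S \<subseteq> ?s ! i" "S \<subseteq> ?s ! j" using i0 Sj by auto
    obtain k where k: "k < j" "card (sd (cs!k) (cs!j)) = 1" "sd (cs!k) (cs!j) \<subseteq> sd (cs!i) (cs!j)"
      using dir2_step[OF fin sub dist isoj jl i(1)] by blast
    have sij: "?s ! i = facet_of X (cs!i)" "?s ! j = facet_of X (cs!j)" "?s ! k = facet_of X (cs!k)"
      using i(1) k(1) jl by auto
    have "S \<subseteq> facet_of X (cs!i) \<inter> facet_of X (cs!j)" using i(2,3) unfolding sij by (rule Int_greatest)
    also have "\<dots> \<subseteq> facet_of X (cs!k) \<inter> facet_of X (cs!j)" using fsub1[OF k(3), of X] .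
    finally have sub2: "S \<subseteq> facet_of X (cs!k) \<inter> facet_of X (cs!j)" .
    have "facet_of X (cs!k) \<inter> facet_of X (cs!j) \<in> Pow (?s ! j)" unfolding sij by blast
    moreover have "facet_of X (cs!k) \<inter> facet_of X (cs!j) \<in> (\<Union>i<j. Pow (?s ! i))"
      unfolding UN_iff using k(1) sij(3) by (intro bexI[of _ k]) auto
    ultimately have "S = facet_of X (cs!k) \<inter> facet_of X (cs!j)"
      using mx[rule_format, OF IntI sub2] by simp
    thus "card S = card X - 1" using fcard[OF fin X X] k jl by simp
  qed
qed

theorem proposition4p3:
  fixes X :: "'a set"
  assumes "finite X"
  shows "(\<forall>\<sigma>s. partial_shelling X \<sigma>s \<longrightarrow>
            (\<forall>j. 1 \<le> j \<and> j \<le> length \<sigma>s \<longrightarrow> isometric (set (take j (map vertex_of \<sigma>s)))))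
       \<and> (\<forall>C cs. C \<subseteq> Pow X \<and> isometric C \<and> distinct cs \<and> set cs = C \<and>
            (\<forall>j. 1 \<le> j \<and> j \<le> length cs \<longrightarrow> isometric (set (take j cs)))
            \<longrightarrow> partial_shelling X (map (facet_of X) cs))"
proof (intro conjI allI impI)
  fix \<sigma>s j assume ps: "partial_shelling X \<sigma>s" and j: "1 \<le> j \<and> j \<le> length \<sigma>s"
  then obtain j' where jj: "j = Suc j'" "j' < length \<sigma>s" by (cases j) auto
  have hh: "iso' (set (take (Suc j') (map vertex_of \<sigma>s)))" using dir1[OF assms ps jj(2)] .
  show "isometric (set (take j (map vertex_of \<sigma>s)))"
    unfolding iso_iff jj(1) by (rule hh)
next
  fix C cs assume h: "C \<subseteq> Pow X \<and> isometric C \<and> distinct cs \<and> set cs = C \<and>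
            (\<forall>j. 1 \<le> j \<and> j \<le> length cs \<longrightarrow> isometric (set (take j cs)))"
  show "partial_shelling X (map (facet_of X) cs)"
    using dir2[OF assms, of cs] h iso_iff by auto
qed

end
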